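(* Using the principal branches of $\sqrt{\cdot}$ and $\arctan$, for $|z-1|<1$, \[ \frac{\arctan\sqrt z}{\sqrt z}=\sum_{n=0}^{\infty}\frac{(-1)^n}{2^n}\Bigg[(2n-1)!!\,\frac{\pi}{4}+\frac{n!}{2^n}\sum_{k=1}^{n}(-1)^k\binom{2n-k}{n}\frac{2^{k/2}}{k}\sin\frac{3k\pi}{4}\Bigg]\frac{(z-1)^n}{n!}. \]
   Context: $(2n-1)!!=1\cdot3\cdots(2n-1)$ for $n\ge1$, and $(-1)!!=1$. An empty sum is $0$. *)

theory Defs
  imports "HOL-Analysis.Analysis"
begin

text \<open>Odd double factorial: oddfact n = (2n-1)!! = 1*3*...*(2n-1), with oddfact 0 = (-1)!! = 1.\<close>
fun oddfact :: "nat \<Rightarrow> nat" where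
  "oddfact 0 = 1"
| "oddfact (Suc n) = (2 * n + 1) * oddfact n"

end

theory Submission
  imports Defs
begin

fun ee :: "nat \<Rightarrow> real" where
  "ee 0 = 0" | "ee (Suc 0) = -1" | "ee (Suc (Suc k)) = 2 * ee (Suc k) - 2 * ee k"

lemma sin_3pi4: "sin (3 * pi / 4) = sqrt 2 / 2"
proof -
  have "3 * pi / 4 = pi - pi / 4" by simp
  then show ?thesis by (simp only: sin_pi_minus sin_45)
qed

lemma cos_3pi4: "cos (3 * pi / 4) = - (sqrt 2 / 2)"
proof -
  have "3 * pi / 4 = pi - pi / 4" by simp
  then show ?thesis by (simp only: cos_pi_minus cos_45)
qed

lemma ee_sin_aux:
  "(-1) ^ k * 2 powr (real k / 2) * sin (3 * real k * pi / 4) = ee k \<and>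
   (-1) ^ Suc k * 2 powr (real (Suc k) / 2) * sin (3 * real (Suc k) * pi / 4) = ee (Suc k)"
proof (induction k)
  case 0
  have "sin (3 * pi / 4) * sqrt 2 = 1" by (simp add: sin_3pi4)
  then show ?case by (simp add: powr_half_sqrt mult.commute)
next
  case (Suc k)
  define p where "p = 2 powr (real k / 2)"
  define \<theta> where "\<theta> = 3 * real k * pi / 4"
  have s1: "sin (3 * real (Suc k) * pi / 4) = sqrt 2 / 2 * (cos \<theta> - sin \<theta>)"
  proof -
    have "3 * real (Suc k) * pi / 4 = \<theta> + 3 * pi / 4" by (simp add: \<theta>_def algebra_simps)
    then show ?thesis by (simp only: sin_add sin_3pi4 cos_3pi4) (simp add: algebra_simps)
  qed
  have s2: "sin (3 * real (Suc (Suc k)) * pi / 4) = - cos \<theta>"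
  proof -
    have "3 * real (Suc (Suc k)) * pi / 4 = \<theta> + 3/2 * pi" by (simp add: \<theta>_def algebra_simps)
    have c32: "cos (3 * pi / 2) = 0" using cos_3over2_pi by simp
    have s32: "sin (3 * pi / 2) = -1" using sin_3over2_pi by simp
    have "sin (\<theta> + 3/2 * pi) = - cos \<theta>" by (simp add: sin_add c32 s32)
    then show ?thesis unfolding \<open>3 * real (Suc (Suc k)) * pi / 4 = \<theta> + 3/2 * pi\<close> .
  qed
  have p1: "2 powr (real (Suc k) / 2) = p * sqrt 2"
    by (simp add: p_def add_divide_distrib powr_add powr_half_sqrt)
  have p2: "2 powr (real (Suc (Suc k)) / 2) = 2 * p"
    by (simp add: p_def add_divide_distrib powr_add)
  have r2: "sqrt 2 * sqrt 2 = (2::real)" by simp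
  have e0: "ee k = (-1) ^ k * p * sin \<theta>" using Suc.IH by (simp add: p_def \<theta>_def)
  have gen: "\<And>r X. (-1::real)^Suc k * (p*r) * (r/2*X) = -((-1)^k*p*X)*(r*r/2)"
    by (simp add: algebra_simps)
  have e1: "ee (Suc k) = - ((-1) ^ k * p * (cos \<theta> - sin \<theta>))"
  proof -
    have "ee (Suc k) = (-1) ^ Suc k * (p * sqrt 2) * (sqrt 2 / 2 * (cos \<theta> - sin \<theta>))"
      using Suc.IH by (simp only: p1 s1)
    also have "\<dots> = - ((-1) ^ k * p * (cos \<theta> - sin \<theta>)) * (sqrt 2 * sqrt 2 / 2)" by (rule gen)
    also have "\<dots> = - ((-1) ^ k * p * (cos \<theta> - sin \<theta>))" by (simp only: r2)
    finally show ?thesis .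
  qed
  show ?case
    using Suc.IH
    by (simp only: p2 s2 ee.simps e0 e1) (simp add: algebra_simps)
qed

lemma ee_sin: "(-1) ^ k * 2 powr (real k / 2) * sin (3 * real k * pi / 4) = ee k"
  using ee_sin_aux by blast

definition BB :: "nat \<Rightarrow> nat \<Rightarrow> real" where "BB n k = real ((2 * n - k) choose n)"
definition AA :: "(nat \<Rightarrow> real) \<Rightarrow> nat \<Rightarrow> real" where "AA f n = (\<Sum>k<Suc n. BB n k * f k)"

lemma BB_pascal: "k \<le> m \<Longrightarrow> BB m k = BB (Suc m) (k+1) - BB (Suc m) (k+2)"
proof -
  assume "k \<le> m"
  then have a: "2 * Suc m - (k+1) = Suc (2*m - k)" and b: "2 * Suc m - (k+2) = 2*m - k" by auto
  show ?thesis unfolding BB_def a b by (simp add: binomial_Suc_Suc)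
qed

lemma BB_top: "BB (Suc m) (m + 2) = 0"
  unfolding BB_def by simp

lemma AA_rec:
  assumes r: "\<And>j. f (j+2) = 2 * f (j+1) - 2 * f j"
  shows "AA f (Suc m) = 2 * AA f m + BB (Suc m) 0 * f 0 + BB (Suc m) 1 * (f 1 - 2 * f 0)"
proof -
  define X where "X = (\<Sum>k<Suc m. BB (Suc m) (k+1) * f k)"
  define Y where "Y = (\<Sum>k<Suc m. BB (Suc m) (k+2) * f k)"
  define Z where "Z = (\<Sum>k<Suc m. BB (Suc m) (k+2) * f (k+1))"
  have hA: "AA f m = X - Y"
  proof -
    have "AA f m = (\<Sum>k<Suc m. BB (Suc m) (k+1) * f k - BB (Suc m) (k+2) * f k)"
      unfolding AA_def
    proof (rule sum.cong)
      fix k assume "k \<in> {..<Suc m}"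
      then have "BB m k = BB (Suc m) (k+1) - BB (Suc m) (k+2)" by (intro BB_pascal) auto
      then show "BB m k * f k = BB (Suc m) (k+1) * f k - BB (Suc m) (k+2) * f k"
        by (simp add: left_diff_distrib)
    qed simp
    then show ?thesis by (simp add: X_def Y_def sum_subtractf)
  qed
  have hZ: "Z = X - BB (Suc m) 1 * f 0"
  proof -
    have "X + BB (Suc m) (Suc m + 1) * f (Suc m) = (\<Sum>k<Suc (Suc m). BB (Suc m) (k+1) * f k)"
      by (simp add: X_def)
    also have "\<dots> = BB (Suc m) 1 * f 0 + Z"
      by (subst sum.lessThan_Suc_shift) (simp add: Z_def)
    finally show ?thesis using BB_top[of m] by simp
  qed
  have hS: "AA f (Suc m) = BB (Suc m) 0 * f 0 + BB (Suc m) 1 * f 1 + (\<Sum>k<m. BB (Suc m) (k+2) * f (k+2))"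
  proof -
    have "AA f (Suc m) = BB (Suc m) 0 * f 0 + (\<Sum>k<Suc m. BB (Suc m) (Suc k) * f (Suc k))"
      unfolding AA_def by (rule sum.lessThan_Suc_shift)
    also have "(\<Sum>k<Suc m. BB (Suc m) (Suc k) * f (Suc k)) = BB (Suc m) 1 * f 1 + (\<Sum>k<m. BB (Suc m) (Suc (Suc k)) * f (Suc (Suc k)))"
      by (subst sum.lessThan_Suc_shift) simp
    finally show ?thesis by (simp add: numeral_2_eq_2)
  qed
  have "(\<Sum>k<m. BB (Suc m) (k+2) * f (k+2)) = (\<Sum>k<Suc m. BB (Suc m) (k+2) * f (k+2))"
    using BB_top[of m] by simp
  also have "\<dots> = (\<Sum>k<Suc m. 2 * (BB (Suc m) (k+2) * f (k+1)) - 2 * (BB (Suc m) (k+2) * f k))"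
    by (rule sum.cong) (simp_all only: r right_diff_distrib mult.left_commute)
  also have "\<dots> = 2 * Z - 2 * Y"
    by (simp add: sum_subtractf sum_distrib_left Z_def Y_def)
  finally show ?thesis using hS hA hZ by (simp add: algebra_simps)
qed

lemma ee_rec: "ee (j+2) = 2 * ee (j+1) - 2 * ee j"
  by (simp add: numeral_2_eq_2)

lemma ee2_rec: "ee ((j+2)+2) = 2 * ee ((j+1)+2) - 2 * ee (j+2)"
  by (simp add: numeral_2_eq_2)

lemma key:
  "AA ee (Suc m) - AA (\<lambda>k. ee (k+2)) m + real ((2*m+1) choose (m+1)) = 2 ^ Suc m"
proof (induction m)
  case 0
  show ?case by (simp add: AA_def BB_def numeral_2_eq_2)
next
  case (Suc m)
  have r1: "AA ee (Suc (Suc m)) = 2 * AA ee (Suc m) - BB (Suc (Suc m)) 1"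
    using AA_rec[of ee "Suc m", OF ee_rec] by simp
  have r2: "AA (\<lambda>k. ee (k+2)) (Suc m) = 2 * AA (\<lambda>k. ee (k+2)) m - 2 * BB (Suc m) 0 + 2 * BB (Suc m) 1"
    using AA_rec[of "\<lambda>k. ee (k+2)" m, OF ee2_rec] by (simp add: numeral_2_eq_2 numeral_3_eq_3)
  have b1: "BB (Suc (Suc m)) 1 = real ((2*(Suc m)+1) choose (Suc m+1))"
    unfolding BB_def by (simp add: numeral_2_eq_2)
  have b0: "BB (Suc m) 0 = 2 * real ((2*m+1) choose (m+1))"
  proof -
    have "(2*m+1) choose m = (2*m+1) choose (m+1)"
      using binomial_symmetric[of m "2*m+1"] by simp
    then show ?thesis unfolding BB_def by simp
  qed
  have b1': "BB (Suc m) 1 = real ((2*m+1) choose (m+1))"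
    unfolding BB_def by simp
  show ?case using Suc.IH r1 r2 b1 b0 b1' by (simp add: algebra_simps)
qed

lemma term_id:
  fixes j r :: nat
  shows "(real (j+r) + 2) * real ((j+2*r+3) choose (j+r+2)) - 2*(2*real(j+r)+3) * real ((j+2*r+1) choose (j+r+1))
       = real (Suc j) * (real ((j+2*r+1) choose (j+r)) - real ((j+2*r+1) choose (j+r+1)))"
proof -
  define c0 where "c0 = real ((j+2*r+1) choose (j+r))"
  define c1 where "c1 = real ((j+2*r+1) choose Suc (j+r))"
  define c2 where "c2 = real ((j+2*r+3) choose Suc (Suc (j+r)))"
  define d where "d = real ((j+2*r+2) choose Suc (j+r))"
  have eqn: "Suc (j + r + r) = j+2*r+1" by simp
  have n1: "Suc (j+r) * ((j+2*r+1) choose Suc (j+r)) = Suc r * ((j+2*r+1) choose (j+r))"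
    using Suc_times_binomial_add[of "j+r" r] unfolding eqn .
  have e3: "Suc (Suc (j+2*r+1)) = j+2*r+3" and e4: "Suc (j+2*r+1) = j+2*r+2" by simp_all
  have n2a: "Suc (Suc (j+r)) * ((j+2*r+3) choose Suc (Suc (j+r))) = (j+2*r+3) * ((j+2*r+2) choose Suc (j+r))"
    using Suc_times_binomial[of "Suc (j+r)" "Suc (j+2*r+1)"] unfolding e3 unfolding e4 .
  have n2b: "Suc (j+r) * ((j+2*r+2) choose Suc (j+r)) = (j+2*r+2) * ((j+2*r+1) choose (j+r))"
    using Suc_times_binomial[of "j+r" "j+2*r+1"] unfolding e4 .
  have h1: "(1 + real (j+r)) * c1 = (1 + real r) * c0"
    using arg_cong[OF n1, of real] unfolding c0_def c1_def by (simp only: of_nat_mult of_nat_Suc)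
  have h2a: "(1 + (1 + real (j+r))) * c2 = real (j+2*r+3) * d"
    using arg_cong[OF n2a, of real] unfolding c2_def d_def by (simp only: of_nat_mult of_nat_Suc)
  have h2b: "(1 + real (j+r)) * d = real (j+2*r+2) * c0"
    using arg_cong[OF n2b, of real] unfolding c0_def d_def by (simp only: of_nat_mult of_nat_Suc)
  have pos: "1 + real (j+r) > 0" by simp
  have "(1 + real (j+r)) * ((real (j+r) + 2) * c2 - 2*(2*real(j+r)+3) * c1)
      = real (j+2*r+3) * ((1 + real (j+r)) * d) - 2*(2*real(j+r)+3) * ((1 + real (j+r)) * c1)"
  proof -
    have "(real (j+r) + 2) * c2 = (1 + (1 + real (j+r))) * c2" by simp
    then show ?thesis unfolding h2a by (simp add: algebra_simps)
  qed
  also have "\<dots> = real (j+2*r+3) * (real (j+2*r+2) * c0) - 2*(2*real(j+r)+3) * ((1 + real r) * c0)"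
    by (simp only: h2b h1)
  also have "\<dots> = real (Suc j) * ((1 + real (j+r)) * c0 - (1 + real r) * c0)"
    by (simp add: algebra_simps)
  also have "\<dots> = real (Suc j) * ((1 + real (j+r)) * c0 - (1 + real (j+r)) * c1)"
    by (simp only: h1)
  also have "\<dots> = (1 + real (j+r)) * (real (Suc j) * (c0 - c1))"
    by (simp add: algebra_simps)
  finally have "(1 + real (j+r)) * ((real (j+r) + 2) * c2 - 2*(2*real(j+r)+3) * c1)
      = (1 + real (j+r)) * (real (Suc j) * (c0 - c1))" .
  then have fin: "(real (j+r) + 2) * c2 - 2*(2*real(j+r)+3) * c1 = real (Suc j) * (c0 - c1)"
    using pos by simp
  have e5: "j+r+1 = Suc (j+r)" and e6: "j+r+2 = Suc (Suc (j+r))" by simp_all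
  show ?thesis unfolding e5 e6 using fin unfolding c0_def c1_def c2_def .
qed

definition SS :: "nat \<Rightarrow> real" where "SS n = (\<Sum>k=1..n. BB n k * ee k / real k)"

lemma sum_shift1: "(\<Sum>k=1..n. g k) = (\<Sum>k<n. (g (Suc k) :: real))"
  by (induction n) (simp_all add: sum.atLeast_Suc_atMost_Suc_shift)

lemma term_id2:
  assumes "j \<le> m"
  shows "real (Suc (Suc m)) * BB (Suc (Suc m)) (Suc j) - 2*(2*real (Suc m)+1) * BB (Suc m) (Suc j)
    = real (Suc j) * (real ((2 * Suc m - Suc j) choose m) - BB (Suc m) (Suc j))"
proof -
  obtain r where m: "m = j + r" using assms by (metis le_add_diff_inverse)
  have a1: "2 * Suc (Suc m) - Suc j = j+2*r+3" and a2: "2 * Suc m - Suc j = j+2*r+1"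
    and a3: "Suc (Suc m) = j+r+2" and a4: "Suc m = j+r+1" using m by simp_all
  have r1: "real (Suc (Suc m)) = real (j+r) + 2" and r2: "real (Suc m) = real (j+r) + 1" using m by simp_all
  show ?thesis
    unfolding BB_def a1 a2 r1 r2 unfolding a3 a4 unfolding m
    using term_id[of j r] by (simp add: algebra_simps del: binomial_Suc_Suc)
qed

lemma Srec: "real (Suc n) * SS (Suc n) - 2 * (2 * real n + 1) * SS n = - (2 ^ n)"
proof (cases n)
  case 0
  then show ?thesis by (simp add: SS_def BB_def)
next
  case (Suc m)
  define g where "g = (\<lambda>j. real ((2 * Suc m - Suc j) choose m))"
  have S1: "SS (Suc (Suc m)) = (\<Sum>j<Suc m. BB (Suc (Suc m)) (Suc j) * ee (Suc j) / real (Suc j))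
      + ee (Suc (Suc m)) / real (Suc (Suc m))"
    unfolding SS_def sum_shift1 by (simp add: BB_def)
  have S0: "SS (Suc m) = (\<Sum>j<Suc m. BB (Suc m) (Suc j) * ee (Suc j) / real (Suc j))"
    unfolding SS_def sum_shift1 ..
  have T: "real (Suc (Suc m)) * SS (Suc (Suc m)) - 2 * (2 * real (Suc m) + 1) * SS (Suc m)
     = ee (Suc (Suc m)) + (\<Sum>j<Suc m. (g j - BB (Suc m) (Suc j)) * ee (Suc j))"
  proof -
    have "real (Suc (Suc m)) * SS (Suc (Suc m)) - 2 * (2 * real (Suc m) + 1) * SS (Suc m)
      = ee (Suc (Suc m)) + (\<Sum>j<Suc m. (real (Suc (Suc m)) * BB (Suc (Suc m)) (Suc j) - 2 * (2 * real (Suc m) + 1) * BB (Suc m) (Suc j)) / real (Suc j) * ee (Suc j))"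
    proof -
      define c1 where "c1 = real (Suc (Suc m))"
      define c2 where "c2 = 2 * (2 * real (Suc m) + 1)"
      define P where "P = (\<Sum>j<Suc m. BB (Suc (Suc m)) (Suc j) * ee (Suc j) / real (Suc j))"
      define Q where "Q = (\<Sum>j<Suc m. BB (Suc m) (Suc j) * ee (Suc j) / real (Suc j))"
      have c1nz: "c1 \<noteq> 0" unfolding c1_def by simp
      have "(\<Sum>j<Suc m. (c1 * BB (Suc (Suc m)) (Suc j) - c2 * BB (Suc m) (Suc j)) / real (Suc j) * ee (Suc j))
          = (\<Sum>j<Suc m. c1 * (BB (Suc (Suc m)) (Suc j) * ee (Suc j) / real (Suc j)) - c2 * (BB (Suc m) (Suc j) * ee (Suc j) / real (Suc j)))"
        by (rule sum.cong) (simp_all add: divide_inverse algebra_simps)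
      also have "\<dots> = c1 * P - c2 * Q"
        unfolding P_def Q_def by (simp only: sum_subtractf sum_distrib_left)
      finally have X: "(\<Sum>j<Suc m. (c1 * BB (Suc (Suc m)) (Suc j) - c2 * BB (Suc m) (Suc j)) / real (Suc j) * ee (Suc j)) = c1 * P - c2 * Q" .
      have gen: "\<And>E. c1 * (P + E / c1) - c2 * Q = E + (c1 * P - c2 * Q)"
        using c1nz by (simp add: algebra_simps)
      have "c1 * (P + ee (Suc (Suc m)) / c1) - c2 * Q = ee (Suc (Suc m)) + (c1 * P - c2 * Q)"
        by (rule gen)
      then show ?thesis unfolding S1 S0 using X unfolding c1_def c2_def P_def Q_def by (simp del: ee.simps)
    qed
    also have "(\<Sum>j<Suc m. (real (Suc (Suc m)) * BB (Suc (Suc m)) (Suc j) - 2 * (2 * real (Suc m) + 1) * BB (Suc m) (Suc j)) / real (Suc j) * ee (Suc j))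
       = (\<Sum>j<Suc m. (g j - BB (Suc m) (Suc j)) * ee (Suc j))"
    proof (rule sum.cong)
      fix j assume "j \<in> {..<Suc m}"
      then have "j \<le> m" by simp
      from term_id2[OF this] show "(real (Suc (Suc m)) * BB (Suc (Suc m)) (Suc j) - 2 * (2 * real (Suc m) + 1) * BB (Suc m) (Suc j)) / real (Suc j) * ee (Suc j) = (g j - BB (Suc m) (Suc j)) * ee (Suc j)"
        unfolding g_def by (simp del: of_nat_Suc)
    qed simp
    finally show ?thesis .
  qed
  have G: "(\<Sum>j<Suc m. g j * ee (Suc j)) = - real ((2*m+1) choose (m+1)) + AA (\<lambda>k. ee (k+2)) m - ee (Suc (Suc m))"
  proof -
    have "(\<Sum>j<Suc m. g j * ee (Suc j)) = g 0 * ee 1 + (\<Sum>j<m. g (Suc j) * ee (Suc (Suc j)))"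
      by (subst sum.lessThan_Suc_shift) simp
    also have "g 0 = real ((2*m+1) choose (m+1))"
    proof -
      have "(2*m+1) choose m = (2*m+1) choose (m+1)"
        using binomial_symmetric[of m "2*m+1"] by simp
      then show ?thesis unfolding g_def by simp
    qed
    also have "(\<Sum>j<m. g (Suc j) * ee (Suc (Suc j))) = (\<Sum>j<m. BB m j * ee (j+2))"
      unfolding g_def BB_def by (rule sum.cong) (simp_all add: numeral_2_eq_2)
    also have "\<dots> = AA (\<lambda>k. ee (k+2)) m - ee (Suc (Suc m))"
      unfolding AA_def by (simp add: BB_def numeral_2_eq_2)
    finally show ?thesis by simp
  qed
  have H: "(\<Sum>j<Suc m. BB (Suc m) (Suc j) * ee (Suc j)) = AA ee (Suc m)"
    unfolding AA_def by (subst (2) sum.lessThan_Suc_shift) simp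
  have "real (Suc (Suc m)) * SS (Suc (Suc m)) - 2 * (2 * real (Suc m) + 1) * SS (Suc m)
     = ee (Suc (Suc m)) + (\<Sum>j<Suc m. g j * ee (Suc j)) - (\<Sum>j<Suc m. BB (Suc m) (Suc j) * ee (Suc j))"
    unfolding T by (simp add: left_diff_distrib sum_subtractf)
  also have "\<dots> = - (2 ^ Suc m)"
    unfolding G H using key[of m] by simp
  finally show ?thesis using Suc by simp
qed

lemma alg:
  fixes t F a b S0 S1 sg Od :: real
  assumes tz: "t \<noteq> 0" and Fz: "F \<noteq> 0" and az: "a \<noteq> 0" and rec: "a * S1 - 2*b*S0 = -t"
  shows "2*a*((- sg)/(2*t)*(b*Od*(pi/4) + (a*F)/(2*t)*S1)/(a*F))
        + b*(sg/t*(Od*(pi/4) + F/t*S0)/F) = sg/(2*t)"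
proof -
  have e1: "2*a*((- sg)/(2*t)*(b*Od*(pi/4) + (a*F)/(2*t)*S1)/(a*F))
     = - (sg*b*Od*pi/(4*t*F)) - sg*(a*S1)/(2*t*t)"
    using az tz Fz by (simp add: field_simps)
  have e2: "b*(sg/t*(Od*(pi/4) + F/t*S0)/F) = sg*b*Od*pi/(4*t*F) + sg*b*S0/(t*t)"
    using az tz Fz by (simp add: field_simps)
  have r: "a*S1 = 2*b*S0 - t" using rec by simp
  show ?thesis unfolding e1 e2 r using tz by (simp add: field_simps)
qed

definition cf :: "nat \<Rightarrow> real" where
  "cf n = (-1) ^ n / 2 ^ n * (real (oddfact n) * (pi / 4) + fact n / 2 ^ n * SS n) / fact n"

lemma cf_rec: "2 * real (Suc n) * cf (Suc n) + (2 * real n + 1) * cf n = (-1) ^ n / 2 ^ Suc n"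
proof -
  have rec: "real (Suc n) * SS (Suc n) - 2 * (2 * real n + 1) * SS n = - (2 ^ n)"
    by (rule Srec)
  have c1: "cf (Suc n) = (- ((-1)^n))/(2*2^n)*((2 * real n + 1)*real (oddfact n)*(pi/4) + (real (Suc n)*fact n)/(2*2^n)*SS (Suc n))/(real (Suc n)*fact n)"
  proof -
    have o: "real (oddfact (Suc n)) = (2*real n+1)*real (oddfact n)" by (simp add: algebra_simps)
    have fS: "(fact (Suc n)::real) = real (Suc n) * fact n" by (simp del: of_nat_Suc)
    show ?thesis unfolding cf_def o fS by (simp del: of_nat_Suc)
  qed
  have c0: "cf n = (-1)^n/2^n*(real (oddfact n)*(pi/4) + fact n/2^n*SS n)/fact n"
    unfolding cf_def ..
  show ?thesis unfolding c1 c0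
    using alg[of "2^n" "fact n" "real (Suc n)" "SS (Suc n)" "2 * real n + 1" "SS n" "(-1)^n" "real (oddfact n)", OF _ _ _ rec]
    by (simp add: mult.assoc)
qed

lemma cf_bound: "\<bar>cf n\<bar> \<le> 1"
proof (induction n)
  case 0
  have c0: "cf 0 = pi / 4" by (simp add: cf_def SS_def)
  show ?case unfolding c0 using pi_less_4 pi_gt_zero by simp
next
  case (Suc n)
  have e: "cf (Suc n) = ((-1) ^ n / 2 ^ Suc n - (2 * real n + 1) * cf n) / (2 * real (Suc n))"
    using cf_rec[of n] by (simp add: field_simps del: of_nat_Suc)
  have a1: "\<bar>(-1) ^ n / 2 ^ Suc n :: real\<bar> \<le> 1"
  proof -
    have "(1::real) \<le> 2 ^ Suc n" by (rule one_le_power) simp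
    then show ?thesis by (simp add: abs_mult power_abs del: power_Suc)
  qed
  have a2: "\<bar>(2 * real n + 1) * cf n\<bar> \<le> 2 * real n + 1"
    using Suc.IH by (simp add: abs_mult mult_left_le)
  have rs: "real (Suc n) = real n + 1" by simp
  have tri: "\<bar>(-1) ^ n / 2 ^ Suc n - (2 * real n + 1) * cf n\<bar> \<le> \<bar>(-1) ^ n / 2 ^ Suc n :: real\<bar> + \<bar>(2 * real n + 1) * cf n\<bar>"
    by (rule abs_triangle_ineq4)
  have "\<bar>(-1) ^ n / 2 ^ Suc n :: real\<bar> + \<bar>(2 * real n + 1) * cf n\<bar> \<le> 1 + (2 * real n + 1)"
    using a1 a2 by (rule add_mono)
  with tri have "\<bar>(-1) ^ n / 2 ^ Suc n - (2 * real n + 1) * cf n\<bar> \<le> 1 + (2 * real n + 1)"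
    by (rule order_trans)
  then have "\<bar>(-1) ^ n / 2 ^ Suc n - (2 * real n + 1) * cf n\<bar> \<le> 2 * real (Suc n)"
    using rs by simp
  then show ?case unfolding e by (simp add: abs_divide del: of_nat_Suc)
qed

definition cc :: "nat \<Rightarrow> complex" where "cc n = complex_of_real (cf n)"
definition gg :: "complex \<Rightarrow> complex" where "gg u = (\<Sum>n. cc n * u ^ n)"

lemma summ: assumes "norm u < 1" shows "summable (\<lambda>n. cc n * u ^ n)"
proof (rule summable_comparison_test)
  show "\<exists>N. \<forall>n\<ge>N. norm (cc n * u ^ n) \<le> norm u ^ n"
    using cf_bound by (auto simp: cc_def norm_mult norm_power intro!: mult_left_le_one_le)
  show "summable (\<lambda>n. norm u ^ n)" using assms by (simp add: summable_geometric)
qed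

lemma summ_d: assumes "norm u < 1" shows "summable (\<lambda>n. diffs cc n * u ^ n)"
  by (rule termdiff_converges[of u 1]) (use assms summ in auto)

lemma gg_deriv:
  assumes "norm u < 1"
  shows "(gg has_field_derivative (\<Sum>n. diffs cc n * u ^ n)) (at u)"
proof -
  define K where "K = complex_of_real ((1 + norm u) / 2)"
  have nK: "norm K = (1 + norm u) / 2"
  proof -
    have "norm K = \<bar>(1 + norm u) / 2\<bar>" unfolding K_def by (rule norm_of_real)
    then show ?thesis by simp
  qed
  have "norm K < 1" using assms nK by simp
  then have sm: "summable (\<lambda>n. cc n * K ^ n)" by (rule summ)
  have "norm u < norm K" using assms nK by simp
  from termdiffs_strong[OF sm this] show ?thesis
    unfolding gg_def[abs_def] .
qed

lemma gg_ode:
  assumes u: "norm u < 1"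
  shows "2 * (1 + u) * (\<Sum>n. diffs cc n * u ^ n) + gg u = 1 / (2 + u)"
proof -
  define D where "D = (\<Sum>n. diffs cc n * u ^ n)"
  have sD: "(\<lambda>n. diffs cc n * u ^ n) sums D" unfolding D_def using summ_d[OF u] by (rule summable_sums)
  have sG: "(\<lambda>n. cc n * u ^ n) sums gg u" unfolding gg_def using summ[OF u] by (rule summable_sums)
  define f where "f = (\<lambda>n. of_nat n * cc n * u ^ n)"
  have "(\<lambda>n. f (Suc n)) = (\<lambda>n. u * (diffs cc n * u ^ n))"
    by (auto simp: f_def diffs_def fun_eq_iff algebra_simps)
  then have "(\<lambda>n. f (Suc n)) sums (u * D)" using sums_mult[OF sD, of u] by simp
  then have "f sums (u * D + f 0)" by (simp only: sums_Suc_iff)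
  moreover have "f 0 = 0" by (simp add: f_def)
  ultimately have sf: "f sums (u * D)" by simp
  have sAll: "(\<lambda>n. 2 * (diffs cc n * u ^ n) + 2 * f n + cc n * u ^ n) sums (2 * D + 2 * (u * D) + gg u)"
    by (intro sums_add sums_mult sD sf sG)
  have eqt: "(\<lambda>n. 2 * (diffs cc n * u ^ n) + 2 * f n + cc n * u ^ n) = (\<lambda>n. (1/2) * (- u / 2) ^ n)"
  proof
    fix n
    have r: "2 * real (Suc n) * cf (Suc n) + (2 * real n + 1) * cf n = (-1) ^ n / 2 ^ Suc n" by (rule cf_rec)
    have "2 * (diffs cc n * u ^ n) + 2 * f n + cc n * u ^ n
        = complex_of_real (2 * real (Suc n) * cf (Suc n) + (2 * real n + 1) * cf n) * u ^ n"
      by (simp add: f_def diffs_def cc_def algebra_simps del: of_nat_Suc)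
    also have "\<dots> = complex_of_real ((-1) ^ n / 2 ^ Suc n) * u ^ n" by (simp only: r)
    also have "\<dots> = (1/2) * (- u / 2) ^ n"
    proof -
      have "(- u / 2) ^ n = (-1) ^ n * u ^ n / 2 ^ n"
        by (simp add: power_minus[of "u/2"] power_divide)
      then show ?thesis by simp
    qed
    finally show "2 * (diffs cc n * u ^ n) + 2 * f n + cc n * u ^ n = (1/2) * (- u / 2) ^ n" .
  qed
  have "norm (- u / 2) < 1" using u by (simp add: norm_divide)
  then have "(\<lambda>n. (- u / 2) ^ n) sums (1 / (1 - (- u / 2)))" by (rule geometric_sums)
  then have "(\<lambda>n. (1/2) * (- u / 2) ^ n) sums ((1/2) * (1 / (1 - (- u / 2))))" by (rule sums_mult)
  moreover have "(1/2) * (1 / (1 - (- u / 2))) = 1 / (2 + u)"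
  proof -
    have "2 + u \<noteq> 0"
    proof
      assume "2 + u = 0" then have "u = -2" by (simp add: add_eq_0_iff)
      then show False using u by simp
    qed
    then show ?thesis by (simp add: field_simps)
  qed
  ultimately have "(\<lambda>n. (1/2) * (- u / 2) ^ n) sums (1 / (2 + u))" by simp
  with sAll eqt have "2 * D + 2 * (u * D) + gg u = 1 / (2 + u)" using sums_unique2 by metis
  then show ?thesis unfolding D_def[symmetric] by (simp add: algebra_simps)
qed

lemma inner_eq:
  "(\<Sum>k = 1..n. (-1) ^ k * real ((2 * n - k) choose n)
                     * (2 powr (real k / 2)) / real k * sin (3 * real k * pi / 4)) = SS n"
  unfolding SS_def
proof (rule sum.cong)
  fix k assume "k \<in> {1..n}"
  have gen: "\<And>a c p s k::real. a * c * p / k * s = c * (a * p * s) / k" by (simp add: divide_inverse mult_ac)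
  have "(-1) ^ k * real ((2 * n - k) choose n) * (2 powr (real k / 2)) / real k * sin (3 * real k * pi / 4)
      = real ((2 * n - k) choose n) * ((-1) ^ k * 2 powr (real k / 2) * sin (3 * real k * pi / 4)) / real k"
    by (rule gen)
  then show "(-1) ^ k * real ((2 * n - k) choose n) * (2 powr (real k / 2)) / real k * sin (3 * real k * pi / 4)
      = BB n k * ee k / real k"
    unfolding ee_sin BB_def .
qed simp

lemma Re_pos_nonpos: "Re x > 0 \<Longrightarrow> x \<notin> \<real>\<^sub>\<le>\<^sub>0"
proof
  assume "Re x > 0" "x \<in> \<real>\<^sub>\<le>\<^sub>0"
  then obtain r where "x = of_real r" "r \<le> 0" by (auto elim: nonpos_Reals_cases)
  with \<open>Re x > 0\<close> show False by simp
qed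

lemma Re_csqrt_pos: assumes "Re x > 0" shows "Re (csqrt x) > 0"
proof (rule ccontr)
  assume "\<not> Re (csqrt x) > 0"
  then have r0: "Re (csqrt x) = 0" using Re_csqrt[of x] by simp
  have xe: "x = csqrt x * csqrt x" using power2_csqrt[of x] by (simp only: power2_eq_square)
  have gen: "\<And>w::complex. Re w = 0 \<Longrightarrow> Re (w * w) \<le> 0" by simp
  have "Re (csqrt x * csqrt x) \<le> 0" using r0 by (rule gen)
  then have "Re x \<le> 0" using xe by metis
  with assms show False by simp
qed

theorem theorem3p2:
  fixes z :: complex
  assumes "cmod (z - 1) < 1"
  shows "(\<lambda>n. complex_of_real
            ((-1) ^ n / 2 ^ n *
              (real (oddfact n) * (pi / 4)
               + fact n / 2 ^ n *
                 (\<Sum>k = 1..n. (-1) ^ k * real ((2 * n - k) choose n)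
                     * (2 powr (real k / 2)) / real k * sin (3 * real k * pi / 4))))
           * (z - 1) ^ n / fact n)
         sums (Arctan (csqrt z) / csqrt z)"
proof -
  define S where "S = ball (1::complex) 1"
  define kf where "kf = (\<lambda>x. csqrt x * gg (x - 1) - Arctan (csqrt x))"
  have inS: "x \<in> S \<Longrightarrow> cmod (x - 1) < 1" for x
    unfolding S_def by (simp add: dist_norm norm_minus_commute)
  have ReS: "x \<in> S \<Longrightarrow> Re x > 0" for x
  proof -
    assume "x \<in> S"
    then have "cmod (x - 1) < 1" by (rule inS)
    moreover have "\<bar>Re (x - 1)\<bar> \<le> cmod (x - 1)" by (rule abs_Re_le_cmod)
    ultimately show "Re x > 0" by simp
  qed
  have deriv: "(kf has_field_derivative 0) (at x within S)" if xS: "x \<in> S" for x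
  proof -
    define w where "w = csqrt x"
    define G where "G = gg (x - 1)"
    define Dv where "Dv = (\<Sum>n. diffs cc n * (x - 1) ^ n)"
    have Rx: "Re x > 0" using xS by (rule ReS)
    have nx: "x \<notin> \<real>\<^sub>\<le>\<^sub>0" using Rx by (rule Re_pos_nonpos)
    have Rw: "Re w > 0" unfolding w_def using Rx by (rule Re_csqrt_pos)
    have wnz: "w \<noteq> 0" using Rw by auto
    have w2: "w ^ 2 = x" unfolding w_def by simp
    have x1nz: "1 + x \<noteq> 0" using Rx by (auto simp: complex_eq_iff)
    have nu: "cmod (x - 1) < 1" using xS by (rule inS)
    have d1: "(csqrt has_field_derivative inverse (2 * w)) (at x)"
      unfolding w_def using nx by (rule has_field_derivative_csqrt)
    have dlin: "((\<lambda>x. x - 1) has_field_derivative 1) (at x)"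
      by (auto intro!: derivative_eq_intros)
    have d2: "((\<lambda>x. gg (x - 1)) has_field_derivative Dv * 1) (at x)"
      unfolding Dv_def by (rule DERIV_chain2[OF gg_deriv[OF nu] dlin])
    have dA: "(Arctan has_field_derivative inverse (1 + w\<^sup>2)) (at w)"
      by (rule has_field_derivative_Arctan) (use Rw in simp)
    have d3: "((\<lambda>x. Arctan (csqrt x)) has_field_derivative inverse (1 + w\<^sup>2) * inverse (2 * w)) (at x)"
      using DERIV_chain2[OF dA[unfolded w_def] d1[unfolded w_def]] unfolding w_def .
    have d4: "((\<lambda>x. csqrt x * gg (x - 1)) has_field_derivative inverse (2 * w) * gg (x - 1) + (Dv * 1) * csqrt x) (at x)"
      by (rule DERIV_mult[OF d1 d2])
    have dk: "(kf has_field_derivative (inverse (2 * w) * G + Dv * 1 * w - inverse (1 + w\<^sup>2) * inverse (2 * w))) (at x)"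
      unfolding kf_def G_def w_def by (rule DERIV_diff[OF d4[unfolded w_def] d3[unfolded w_def]])
    have ode: "2 * (1 + (x - 1)) * Dv + G = 1 / (2 + (x - 1))"
      unfolding Dv_def G_def by (rule gg_ode[OF nu])
    have ode': "2 * x * Dv + G = 1 / (1 + x)" using ode by (simp add: algebra_simps)
    have a: "Dv * 1 * w = inverse (2 * w) * (2 * x * Dv)"
      unfolding w2[symmetric] using wnz by (simp add: power2_eq_square field_simps)
    have "inverse (2 * w) * G + Dv * 1 * w - inverse (1 + w\<^sup>2) * inverse (2 * w)
        = inverse (2 * w) * (2 * x * Dv + G - inverse (1 + x))"
      unfolding a w2 by (simp add: algebra_simps)
    also have "\<dots> = 0" unfolding ode' by (simp add: inverse_eq_divide)
    finally have z0: "inverse (2 * w) * G + Dv * 1 * w - inverse (1 + w\<^sup>2) * inverse (2 * w) = 0" .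
    have "(kf has_field_derivative 0) (at x)" using dk unfolding z0 .
    then show ?thesis by (rule has_field_derivative_at_within)
  qed
  have cvx: "convex S" unfolding S_def by (rule convex_ball)
  obtain c where c: "\<forall>x\<in>S. kf x = c"
    using has_field_derivative_zero_constant[OF cvx deriv] by blast
  have zS: "z \<in> S" unfolding S_def using assms by (simp add: dist_norm norm_minus_commute)
  have oS: "1 \<in> S" unfolding S_def by simp
  have k1: "kf 1 = 0"
  proof -
    have "gg 0 = cc 0" unfolding gg_def by (rule powser_zero)
    also have "cc 0 = complex_of_real (pi / 4)" by (simp add: cc_def cf_def SS_def)
    finally have g0: "gg 0 = complex_of_real (pi / 4)" .
    have "Arctan 1 = Arctan (complex_of_real 1)" by simp
    also have "\<dots> = complex_of_real (arctan 1)" by (rule Arctan_of_real)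
    finally have a1: "Arctan 1 = complex_of_real (pi / 4)" by (simp add: arctan_one)
    have "kf 1 = gg 0 - Arctan 1" by (simp add: kf_def)
    then show ?thesis unfolding g0 a1 by simp
  qed
  have "kf z = 0" using c zS oS k1 by metis
  then have "csqrt z * gg (z - 1) = Arctan (csqrt z)" unfolding kf_def by simp
  moreover have "csqrt z \<noteq> 0" using Re_csqrt_pos[OF ReS[OF zS]] by auto
  moreover have gen: "\<And>a b c::complex. a \<noteq> 0 \<Longrightarrow> a * b = c \<Longrightarrow> b = c / a"
    by (auto simp: eq_divide_eq mult.commute)
  ultimately have gz: "gg (z - 1) = Arctan (csqrt z) / csqrt z" by blast
  have sm: "(\<lambda>n. cc n * (z - 1) ^ n) sums gg (z - 1)"
    unfolding gg_def using summ[OF assms] by (rule summable_sums)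
  have eqf: "(\<lambda>n. complex_of_real
            ((-1) ^ n / 2 ^ n *
              (real (oddfact n) * (pi / 4)
               + fact n / 2 ^ n *
                 (\<Sum>k = 1..n. (-1) ^ k * real ((2 * n - k) choose n)
                     * (2 powr (real k / 2)) / real k * sin (3 * real k * pi / 4))))
           * (z - 1) ^ n / fact n) = (\<lambda>n. cc n * (z - 1) ^ n)"
  proof
    fix n
    show "complex_of_real
            ((-1) ^ n / 2 ^ n *
              (real (oddfact n) * (pi / 4)
               + fact n / 2 ^ n *
                 (\<Sum>k = 1..n. (-1) ^ k * real ((2 * n - k) choose n)
                     * (2 powr (real k / 2)) / real k * sin (3 * real k * pi / 4))))
           * (z - 1) ^ n / fact n = cc n * (z - 1) ^ n"
    proof -
      have gen: "\<And>X::real. complex_of_real X * (z - 1) ^ n / fact n = complex_of_real (X / fact n) * (z - 1) ^ n"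
        by (simp add: of_real_divide)
      show ?thesis unfolding inner_eq cc_def cf_def by (rule gen)
    qed
  qed
  show ?thesis unfolding eqf gz[symmetric] by (rule sm)
qed

end
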